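(* Let $m, n_0, n_1$ be positive integers and $n(\lambda) = n_0 + n_1\lambda$. Suppose nonzero polynomials $x(\lambda), y(\lambda), z(\lambda) \in \mathbb{Q}[\lambda]$ satisfy $$\frac{m}{n(\lambda)} = \frac{1}{x(\lambda)} + \frac{1}{y(\lambda)} + \frac{1}{z(\lambda)}$$ identically, where $z(\lambda) = z_0 + z_1\lambda$ with $z_1 \neq 0$, and both $x$ and $y$ have degree larger than $1$. Then $z_1 = n_1/m$.
   Context: $\lambda$ is an indeterminate; the equation is an identity of rational functions in $\lambda$. *)

theory Defs
  imports "HOL-Computational_Algebra.Polynomial" "HOL-Computational_Algebra.Fraction_Field"
begin

definition rf :: "rat poly \<Rightarrow> rat poly fract" where
  "rf p = Fract p 1"

end

theory Submission
  imports Defs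
begin

lemma rf_mult: "rf (p*q) = rf p * rf q" by (simp add: rf_def Zero_fract_def eq_fract)
lemma rf_add: "rf (p+q) = rf p + rf q" by (simp add: rf_def Zero_fract_def eq_fract)
lemma rf_eq: "rf p = rf q \<longleftrightarrow> p = q" by (simp add: rf_def eq_fract)
lemma rf_nz: "rf p = 0 \<longleftrightarrow> p = 0" by (simp add: rf_def Zero_fract_def eq_fract)

theorem lemma3:
  fixes m n0 n1 :: nat and x y z :: "rat poly" and z0 z1 :: rat
  assumes "m > 0" and "n0 > 0" and "n1 > 0"
    and "x \<noteq> 0" and "y \<noteq> 0" and "z \<noteq> 0"
    and "z = [:z0, z1:]" and "z1 \<noteq> 0"
    and "degree x > 1" and "degree y > 1"
    and "rf [:of_nat m:] / rf [:of_nat n0, of_nat n1:]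
         = 1 / rf x + 1 / rf y + 1 / rf z"
  shows "z1 = of_nat n1 / of_nat m"
proof -
  define n where "n = ([:of_nat n0, of_nat n1:] :: rat poly)"
  define M where "M = ([:of_nat m:] :: rat poly)"
  have nnz: "n \<noteq> 0" using assms(2) by (simp add: n_def)
  have e: "rf M / rf n = 1 / rf x + 1 / rf y + 1 / rf z"
    using assms(11) by (simp add: n_def M_def)
  have "rf M * rf x * rf y * rf z = rf n * (rf y * rf z + rf x * rf z + rf x * rf y)"
    using e assms(4-6) nnz by (simp add: rf_nz field_simps)
  hence "rf (M*x*y*z) = rf (n*(y*z+x*z+x*y))" by (simp add: rf_mult rf_add)
  hence "M*x*y*z = n*(y*z+x*z+x*y)" by (simp add: rf_eq)
  hence key: "(M*z - n)*x*y = n*z*(x+y)" by (simp add: algebra_simps)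
  show ?thesis
  proof (rule ccontr)
    assume ne: "z1 \<noteq> of_nat n1 / of_nat m"
    have w: "M*z - n = [:of_nat m * z0 - of_nat n0, of_nat m * z1 - of_nat n1:]"
      by (simp add: M_def n_def assms(7))
    have "of_nat m * z1 - of_nat n1 \<noteq> 0" using ne assms(1) by (auto simp: field_simps)
    hence dw: "degree (M*z - n) = 1" using w by simp
    hence wnz: "M*z - n \<noteq> 0" by auto
    have "degree ((M*z - n)*x*y) = 1 + degree x + degree y"
      using dw wnz assms(4,5) by (simp add: degree_mult_eq)
    moreover have "degree (n*z*(x+y)) \<le> 2 + max (degree x) (degree y)"
    proof -
      have "degree (n*z*(x+y)) \<le> degree n + degree z + degree (x+y)"
        by (meson add_le_mono degree_mult_le order_trans order_refl)
      moreover have "degree n \<le> 1" "degree z \<le> 1" using assms(7) by (auto simp: n_def)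
      moreover have "degree (x+y) \<le> max (degree x) (degree y)" by (rule degree_add_le_max)
      ultimately show ?thesis by linarith
    qed
    ultimately show False using key assms(9,10) by simp
  qed
qed

end
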